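(* Let $(\mathfrak g,[\cdot,\cdot],\alpha,\varepsilon)$ be a color Hom-Lie algebra and $\rho$ a representation of $\mathfrak g$ on $(M,\beta)$. Let $M^*$ be the (graded) dual of $M$, $\tilde\beta:M^*\to M^*$, $\tilde\beta(f)=f\circ\beta$, and $\tilde\rho:\mathfrak g\to\mathrm{End}(M^* )$, $\tilde\rho(x)(f)=-\varepsilon(x,f)\,f\circ\rho(x)$ for homogeneous $x,f$. Then $\tilde\rho$ is a representation of $\mathfrak g$ on $(M^*,\tilde\beta)$ if and only if $\rho(x)\circ\rho(\alpha(y))-\varepsilon(x,y)\rho(y)\circ\rho(\alpha(x))=\beta\circ\rho([x,y])$ for all homogeneous $x,y\in\mathfrak g$.
   Context: $\mathbb K$ is a field of characteristic zero and $\Gamma$ an abelian group. A bicharacter is a map $\varepsilon:\Gamma\times\Gamma\to\mathbb K\setminus\{0\}$ with $\varepsilon(a,b)\varepsilon(b,a)=1$, $\varepsilon(a,b+c)=\varepsilon(a,b)\varepsilon(a,c)$, $\varepsilon(a+b,c)=\varepsilon(a,c)\varepsilon(b,c)$; for homogeneous elements $\varepsilon(x,y)=\varepsilon(\deg x,\deg y)$. A color Hom-Lie algebra $(\mathfrak g,[\cdot,\cdot],\alpha,\varepsilon)$: $\Gamma$-graded space, even bilinear bracket, even linear $\alpha$, with $[x,y]=-\varepsilon(x,y)[y,x]$ and $\varepsilon(z,x)[\alpha(x),[y,z]]+\varepsilon(x,y)[\alpha(y),[z,x]]+\varepsilon(y,z)[\alpha(z),[x,y]]=0$. For a $\Gamma$-graded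 space $M$ and even linear $\beta:M\to M$, a representation of $\mathfrak g$ on $(M,\beta)$ is an even linear map $\rho:\mathfrak g\to\mathfrak{gl}(M)$ with $\rho([x,y])\circ\beta=\rho(\alpha(x))\circ\rho(y)-\varepsilon(x,y)\rho(\alpha(y))\circ\rho(x)$ for homogeneous $x,y$. The graded dual $M^*$ has as degree-$\gamma$ elements the linear forms $f$ with $f(M_\delta)=0$ unless $\gamma+\delta=0$. *)

theory Defs
  imports Complex_Main "HOL-Library.Function_Algebras"
begin

definition lin_on :: "('k \<Rightarrow> 'u::ab_group_add \<Rightarrow> 'u) \<Rightarrow> ('k \<Rightarrow> 'w::ab_group_add \<Rightarrow> 'w)
    \<Rightarrow> 'u set \<Rightarrow> ('u \<Rightarrow> 'w) \<Rightarrow> bool" where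
  "lin_on s1 s2 V f \<longleftrightarrow>
     (\<forall>u\<in>V. \<forall>v\<in>V. f (u + v) = f u + f v) \<and> (\<forall>c. \<forall>v\<in>V. f (s1 c v) = s2 c (f v))"

definition graded_space :: "('k::field \<Rightarrow> 'v::ab_group_add \<Rightarrow> 'v) \<Rightarrow> ('G::ab_group_add \<Rightarrow> 'v set) \<Rightarrow> bool" where
  "graded_space s G \<longleftrightarrow> vector_space s \<and>
     (\<forall>\<gamma>. 0 \<in> G \<gamma> \<and> (\<forall>u\<in>G \<gamma>. \<forall>v\<in>G \<gamma>. u + v \<in> G \<gamma>) \<and> (\<forall>c. \<forall>v\<in>G \<gamma>. s c v \<in> G \<gamma>)) \<and>
     (\<forall>v. \<exists>!c. finite {\<gamma>. c \<gamma> \<noteq> 0} \<and> (\<forall>\<gamma>. c \<gamma> \<in> G \<gamma>) \<and> v = (\<Sum>\<gamma>\<in>{\<gamma>. c \<gamma> \<noteq> 0}. c \<gamma>))"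

definition bicharacter :: "('G::ab_group_add \<Rightarrow> 'G \<Rightarrow> 'k::field) \<Rightarrow> bool" where
  "bicharacter \<epsilon> \<longleftrightarrow> (\<forall>a b. \<epsilon> a b \<noteq> 0) \<and> (\<forall>a b. \<epsilon> a b * \<epsilon> b a = 1) \<and>
     (\<forall>a b c. \<epsilon> a (b + c) = \<epsilon> a b * \<epsilon> a c) \<and> (\<forall>a b c. \<epsilon> (a + b) c = \<epsilon> a c * \<epsilon> b c)"

definition color_hom_lie :: "('k::field \<Rightarrow> 'g::ab_group_add \<Rightarrow> 'g) \<Rightarrow> ('G::ab_group_add \<Rightarrow> 'g set)
    \<Rightarrow> ('g \<Rightarrow> 'g \<Rightarrow> 'g) \<Rightarrow> ('g \<Rightarrow> 'g) \<Rightarrow> ('G \<Rightarrow> 'G \<Rightarrow> 'k) \<Rightarrow> bool" where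
  "color_hom_lie s G br \<alpha> \<epsilon> \<longleftrightarrow> graded_space s G \<and> bicharacter \<epsilon> \<and>
     (\<forall>x. lin_on s s UNIV (br x)) \<and> (\<forall>y. lin_on s s UNIV (\<lambda>x. br x y)) \<and>
     (\<forall>a b x y. x \<in> G a \<longrightarrow> y \<in> G b \<longrightarrow> br x y \<in> G (a + b)) \<and>
     lin_on s s UNIV \<alpha> \<and> (\<forall>a x. x \<in> G a \<longrightarrow> \<alpha> x \<in> G a) \<and>
     (\<forall>a b x y. x \<in> G a \<longrightarrow> y \<in> G b \<longrightarrow> br x y = - s (\<epsilon> a b) (br y x)) \<and>
     (\<forall>a b c x y z. x \<in> G a \<longrightarrow> y \<in> G b \<longrightarrow> z \<in> G c \<longrightarrow>
        s (\<epsilon> c a) (br (\<alpha> x) (br y z)) + s (\<epsilon> a b) (br (\<alpha> y) (br z x))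
        + s (\<epsilon> b c) (br (\<alpha> z) (br x y)) = 0)"

definition is_rep :: "('k::field \<Rightarrow> 'g::ab_group_add \<Rightarrow> 'g) \<Rightarrow> ('G::ab_group_add \<Rightarrow> 'g set)
    \<Rightarrow> ('g \<Rightarrow> 'g \<Rightarrow> 'g) \<Rightarrow> ('g \<Rightarrow> 'g) \<Rightarrow> ('G \<Rightarrow> 'G \<Rightarrow> 'k)
    \<Rightarrow> ('k \<Rightarrow> 'v::ab_group_add \<Rightarrow> 'v) \<Rightarrow> 'v set \<Rightarrow> ('G \<Rightarrow> 'v set)
    \<Rightarrow> ('g \<Rightarrow> 'v \<Rightarrow> 'v) \<Rightarrow> ('v \<Rightarrow> 'v) \<Rightarrow> bool" where
  "is_rep s G br \<alpha> \<epsilon> sV V GV \<rho> \<beta> \<longleftrightarrow>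
     (\<forall>x. \<forall>v\<in>V. \<rho> x v \<in> V) \<and> (\<forall>x. lin_on sV sV V (\<rho> x)) \<and>
     (\<forall>x y. \<forall>v\<in>V. \<rho> (x + y) v = \<rho> x v + \<rho> y v) \<and>
     (\<forall>c x. \<forall>v\<in>V. \<rho> (s c x) v = sV c (\<rho> x v)) \<and>
     (\<forall>a b x v. x \<in> G a \<longrightarrow> v \<in> GV b \<longrightarrow> \<rho> x v \<in> GV (a + b)) \<and>
     (\<forall>a b x y. x \<in> G a \<longrightarrow> y \<in> G b \<longrightarrow>
        (\<forall>v\<in>V. \<rho> (br x y) (\<beta> v) = \<rho> (\<alpha> x) (\<rho> y v) - sV (\<epsilon> a b) (\<rho> (\<alpha> y) (\<rho> x v))))"

definition dual_scale :: "'k::field \<Rightarrow> ('m \<Rightarrow> 'k) \<Rightarrow> ('m \<Rightarrow> 'k)" where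
  "dual_scale c f = (\<lambda>m. c * f m)"

definition dual_deg :: "('k::field \<Rightarrow> 'm::ab_group_add \<Rightarrow> 'm) \<Rightarrow> ('G::ab_group_add \<Rightarrow> 'm set)
    \<Rightarrow> 'G \<Rightarrow> ('m \<Rightarrow> 'k) set" where
  "dual_deg s GM \<gamma> = {f. lin_on s (*) UNIV f \<and> (\<forall>\<delta>. \<gamma> + \<delta> \<noteq> 0 \<longrightarrow> (\<forall>m\<in>GM \<delta>. f m = 0))}"

definition graded_dual :: "('k::field \<Rightarrow> 'm::ab_group_add \<Rightarrow> 'm) \<Rightarrow> ('G::ab_group_add \<Rightarrow> 'm set)
    \<Rightarrow> ('m \<Rightarrow> 'k) set" where
  "graded_dual s GM = {f. \<exists>S c. finite S \<and> (\<forall>\<gamma>\<in>S. c \<gamma> \<in> dual_deg s GM \<gamma>) \<and> f = (\<Sum>\<gamma>\<in>S. c \<gamma>)}"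

end

theory Submission
  imports Defs
begin

lemma exists_functional:
  fixes s :: "'k::field \<Rightarrow> 'm::ab_group_add \<Rightarrow> 'm"
  assumes vs: "vector_space s" and u: "u \<noteq> 0"
  shows "\<exists>g. lin_on s (*) UNIV g \<and> g u \<noteq> (0::'k)"
proof -
  have vk: "vector_space ((*) :: 'k \<Rightarrow> 'k \<Rightarrow> 'k)"
    by unfold_locales (auto simp: algebra_simps)
  interpret vp: vector_space_pair s "(*) :: 'k \<Rightarrow> 'k \<Rightarrow> 'k"
    using vs vk by (simp add: vector_space_pair_def)
  have "vp.vs1.independent {u}" using u by simp
  from vp.linear_independent_extend[OF this, of "\<lambda>_. 1"]
  obtain g where g: "Vector_Spaces.linear s (*) g" "g u = 1" by auto
  then show ?thesis unfolding lin_on_def Vector_Spaces.linear_iff by (intro exI[of _ g]) auto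
qed

definition isdec :: "('G \<Rightarrow> 'm::ab_group_add set) \<Rightarrow> ('G \<Rightarrow> 'm) \<Rightarrow> 'm \<Rightarrow> bool" where
  "isdec G c w \<longleftrightarrow> finite {\<gamma>. c \<gamma> \<noteq> 0} \<and> (\<forall>\<gamma>. c \<gamma> \<in> G \<gamma>) \<and> w = (\<Sum>\<gamma>\<in>{\<gamma>. c \<gamma> \<noteq> 0}. c \<gamma>)"

definition proj :: "('G \<Rightarrow> 'm::ab_group_add set) \<Rightarrow> 'G \<Rightarrow> 'm \<Rightarrow> 'm" where
  "proj G \<delta> w = (THE c. isdec G c w) \<delta>"

lemma gs_unique: "graded_space s G \<Longrightarrow> \<exists>!c. isdec G c w"
  unfolding graded_space_def isdec_def by blast

lemma proj_eq: assumes "graded_space s G" "isdec G c w" shows "proj G \<delta> w = c \<delta>"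
proof -
  have "(THE c. isdec G c w) = c" using gs_unique[OF assms(1), of w] assms(2) by (metis the_equality)
  then show ?thesis unfolding proj_def by simp
qed

lemma isdec_sum_sup:
  assumes "isdec G c w" "finite S" "{\<gamma>. c \<gamma> \<noteq> 0} \<subseteq> S" shows "w = (\<Sum>\<gamma>\<in>S. c \<gamma>)"
proof -
  have "w = (\<Sum>\<gamma>\<in>{\<gamma>. c \<gamma> \<noteq> 0}. c \<gamma>)" using assms(1) unfolding isdec_def by auto
  also have "\<dots> = (\<Sum>\<gamma>\<in>S. c \<gamma>)" using assms(2,3) by (intro sum.mono_neutral_left) auto
  finally show ?thesis .
qed

lemma isdec_add:
  assumes gs: "graded_space s G" and d1: "isdec G c1 w1" and d2: "isdec G c2 w2"
  shows "isdec G (\<lambda>\<gamma>. c1 \<gamma> + c2 \<gamma>) (w1 + w2)"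
proof -
  let ?S = "{\<gamma>. c1 \<gamma> \<noteq> 0} \<union> {\<gamma>. c2 \<gamma> \<noteq> 0}"
  have fS: "finite ?S" using d1 d2 unfolding isdec_def by auto
  have sub: "{\<gamma>. c1 \<gamma> + c2 \<gamma> \<noteq> 0} \<subseteq> ?S" by auto
  have "w1 + w2 = (\<Sum>\<gamma>\<in>?S. c1 \<gamma>) + (\<Sum>\<gamma>\<in>?S. c2 \<gamma>)"
    using isdec_sum_sup[OF d1 fS] isdec_sum_sup[OF d2 fS] by auto
  also have "\<dots> = (\<Sum>\<gamma>\<in>?S. c1 \<gamma> + c2 \<gamma>)" by (simp add: sum.distrib)
  also have "\<dots> = (\<Sum>\<gamma>\<in>{\<gamma>. c1 \<gamma> + c2 \<gamma> \<noteq> 0}. c1 \<gamma> + c2 \<gamma>)"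
    using fS sub by (intro sum.mono_neutral_right) auto
  finally show ?thesis using d1 d2 gs fS sub unfolding isdec_def graded_space_def
    by (auto intro: finite_subset)
qed

lemma isdec_scale:
  assumes gs: "graded_space s G" and d: "isdec G c w"
  shows "isdec G (\<lambda>\<gamma>. s k (c \<gamma>)) (s k w)"
proof -
  interpret vector_space s using gs unfolding graded_space_def by auto
  let ?S = "{\<gamma>. c \<gamma> \<noteq> 0}"
  have fS: "finite ?S" using d unfolding isdec_def by auto
  have sub: "{\<gamma>. s k (c \<gamma>) \<noteq> 0} \<subseteq> ?S" by auto
  have "s k w = (\<Sum>\<gamma>\<in>?S. s k (c \<gamma>))" using d unfolding isdec_def by (simp add: scale_sum_right)
  also have "\<dots> = (\<Sum>\<gamma>\<in>{\<gamma>. s k (c \<gamma>) \<noteq> 0}. s k (c \<gamma>))"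
    using fS sub by (intro sum.mono_neutral_right) auto
  finally show ?thesis using d gs fS sub unfolding isdec_def graded_space_def
    by (auto intro: finite_subset)
qed

lemma isdec_hom:
  assumes "graded_space s G" "w \<in> G \<delta>"
  shows "isdec G (\<lambda>\<gamma>. if \<gamma> = \<delta> then w else 0) w"
proof -
  have "{\<gamma>. (if \<gamma> = \<delta> then w else 0) \<noteq> 0} \<subseteq> {\<delta>}" by auto
  moreover have "w = (\<Sum>\<gamma>\<in>{\<gamma>. (if \<gamma> = \<delta> then w else 0) \<noteq> 0}. if \<gamma> = \<delta> then w else 0)"
    by (cases "w = 0") auto
  ultimately show ?thesis using assms unfolding isdec_def graded_space_def
    by (auto intro: finite_subset)
qed

lemma separate:
  fixes s :: "'k::field \<Rightarrow> 'm::ab_group_add \<Rightarrow> 'm" and G :: "'G::ab_group_add \<Rightarrow> 'm set"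
  assumes gs: "graded_space s G" and v: "v \<noteq> 0"
  shows "\<exists>\<gamma> f. f \<in> dual_deg s G \<gamma> \<and> f v \<noteq> 0"
proof -
  obtain c where d: "isdec G c v" using gs_unique[OF gs] by blast
  have "{\<gamma>. c \<gamma> \<noteq> 0} \<noteq> {}" using d v unfolding isdec_def by (metis sum.empty)
  then obtain \<delta> where cd: "c \<delta> \<noteq> 0" by auto
  have vs: "vector_space s" using gs unfolding graded_space_def by auto
  obtain g where g: "lin_on s (*) UNIV g" "g (c \<delta>) \<noteq> 0"
    using exists_functional[OF vs cd] by auto
  define f where "f = (\<lambda>w. g (proj G \<delta> w))"
  have padd: "proj G \<delta> (u + w) = proj G \<delta> u + proj G \<delta> w" for u w
  proof -
    obtain c1 where d1: "isdec G c1 u" using gs_unique[OF gs] by blast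
    obtain c2 where d2: "isdec G c2 w" using gs_unique[OF gs] by blast
    show ?thesis using proj_eq[OF gs isdec_add[OF gs d1 d2]] proj_eq[OF gs d1] proj_eq[OF gs d2] by simp
  qed
  have pscale: "proj G \<delta> (s k u) = s k (proj G \<delta> u)" for k u
  proof -
    obtain c1 where d1: "isdec G c1 u" using gs_unique[OF gs] by blast
    show ?thesis using proj_eq[OF gs isdec_scale[OF gs d1]] proj_eq[OF gs d1] by simp
  qed
  have "lin_on s (*) UNIV f" using g unfolding f_def lin_on_def by (simp add: padd pscale)
  moreover have "\<forall>\<delta>'. - \<delta> + \<delta>' \<noteq> 0 \<longrightarrow> (\<forall>m\<in>G \<delta>'. f m = 0)"
  proof (intro allI impI ballI)
    fix \<delta>' m assume ne: "- \<delta> + \<delta>' \<noteq> 0" and m: "m \<in> G \<delta>'"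
    have "\<delta>' \<noteq> \<delta>" using ne by auto
    then have "proj G \<delta> m = 0" using proj_eq[OF gs isdec_hom[OF gs m], of \<delta>] by simp
    moreover have "g 0 = 0"
    proof -
      have "g (0 + 0) = g 0 + g 0" using g(1) unfolding lin_on_def by blast
      then show ?thesis by (metis add.right_neutral add_left_imp_eq)
    qed
    ultimately show "f m = 0" unfolding f_def by simp
  qed
  ultimately have "f \<in> dual_deg s G (- \<delta>)" unfolding dual_deg_def by auto
  moreover have "f v \<noteq> 0" unfolding f_def using proj_eq[OF gs d] g by simp
  ultimately show ?thesis by blast
qed
lemma lin_zero: assumes "lin_on s1 s2 V f" "0 \<in> V" shows "f 0 = 0"
proof -
  have "f (0 + 0) = f 0 + f 0" using assms unfolding lin_on_def by blast
  then show ?thesis by (metis add.right_neutral add_left_imp_eq)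
qed

lemma lin_diff: assumes "lin_on s1 s2 UNIV f" shows "f (u - v) = f u - f v"
proof -
  have "f (u - v + v) = f (u - v) + f v" using assms unfolding lin_on_def by blast
  then show ?thesis by (simp add: eq_diff_eq)
qed

lemma dd_zero: "0 \<in> dual_deg s G \<gamma>"
  unfolding dual_deg_def lin_on_def by auto

lemma dd_add: "f \<in> dual_deg s G \<gamma> \<Longrightarrow> g \<in> dual_deg s G \<gamma> \<Longrightarrow> f + g \<in> dual_deg s G \<gamma>"
proof -
  assume f: "f \<in> dual_deg s G \<gamma>" and g: "g \<in> dual_deg s G \<gamma>"
  show ?thesis unfolding dual_deg_def lin_on_def
  proof (intro CollectI conjI allI ballI impI)
    fix \<delta> m assume "\<gamma> + \<delta> \<noteq> 0" "m \<in> G \<delta>"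
    then show "(f + g) m = 0" using f g unfolding dual_deg_def by auto
  qed (use f g in \<open>auto simp: dual_deg_def lin_on_def algebra_simps\<close>)
qed

lemma dd_gd: "f \<in> dual_deg s G \<gamma> \<Longrightarrow> f \<in> graded_dual s G"
  unfolding graded_dual_def by (rule CollectI, rule exI[of _ "{\<gamma>}"], rule exI[of _ "\<lambda>_. f"]) auto

lemma gd_zero: "0 \<in> graded_dual s G"
  unfolding graded_dual_def by (rule CollectI, rule exI[of _ "{}"]) auto

lemma gd_add: assumes "f \<in> graded_dual s G" "g \<in> graded_dual s G" shows "f + g \<in> graded_dual s G"
proof -
  obtain S1 c1 where 1: "finite S1" "\<forall>\<gamma>\<in>S1. c1 \<gamma> \<in> dual_deg s G \<gamma>" "f = (\<Sum>\<gamma>\<in>S1. c1 \<gamma>)"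
    using assms(1) unfolding graded_dual_def by blast
  obtain S2 c2 where 2: "finite S2" "\<forall>\<gamma>\<in>S2. c2 \<gamma> \<in> dual_deg s G \<gamma>" "g = (\<Sum>\<gamma>\<in>S2. c2 \<gamma>)"
    using assms(2) unfolding graded_dual_def by blast
  define c where "c \<gamma> = (if \<gamma> \<in> S1 then c1 \<gamma> else 0) + (if \<gamma> \<in> S2 then c2 \<gamma> else 0)" for \<gamma>
  have "(\<Sum>\<gamma>\<in>S1 \<union> S2. c \<gamma>) = (\<Sum>\<gamma>\<in>S1 \<union> S2. if \<gamma> \<in> S1 then c1 \<gamma> else 0) + (\<Sum>\<gamma>\<in>S1 \<union> S2. if \<gamma> \<in> S2 then c2 \<gamma> else 0)"
    unfolding c_def by (simp add: sum.distrib)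
  also have "\<dots> = f + g" using 1 2
    by (simp add: sum.If_cases Int_absorb1 Int_absorb2)
  finally have "f + g = (\<Sum>\<gamma>\<in>S1 \<union> S2. c \<gamma>)" by simp
  moreover have "\<forall>\<gamma>\<in>S1 \<union> S2. c \<gamma> \<in> dual_deg s G \<gamma>"
    using 1 2 unfolding c_def by (auto intro!: dd_add dd_zero)
  ultimately show ?thesis using 1 2 unfolding graded_dual_def by blast
qed

lemma gd_induct:
  assumes f: "f \<in> graded_dual s G" and P0: "P 0"
    and Ph: "\<And>\<gamma> h. h \<in> dual_deg s G \<gamma> \<Longrightarrow> P h"
    and Padd: "\<And>f g. f \<in> graded_dual s G \<Longrightarrow> g \<in> graded_dual s G \<Longrightarrow> P f \<Longrightarrow> P g \<Longrightarrow> P (f + g)"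
  shows "P f"
proof -
  obtain S c where 1: "finite S" "\<forall>\<gamma>\<in>S. c \<gamma> \<in> dual_deg s G \<gamma>" "f = (\<Sum>\<gamma>\<in>S. c \<gamma>)"
    using f unfolding graded_dual_def by blast
  have "finite T \<Longrightarrow> T \<subseteq> S \<Longrightarrow> P (\<Sum>\<gamma>\<in>T. c \<gamma>)" for T
  proof (induction T rule: finite_induct)
    case empty then show ?case using P0 by (simp only: sum.empty)
  next
    case (insert x F)
    have "(\<Sum>\<gamma>\<in>F. c \<gamma>) \<in> graded_dual s G"
      using insert 1 unfolding graded_dual_def by (intro CollectI exI[of _ F] exI[of _ c]) auto
    moreover have "c x \<in> graded_dual s G" using insert 1 dd_gd by blast
    moreover have "P (c x)" using insert 1 by (intro Ph[of _ x]) auto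
    ultimately show ?case unfolding sum.insert[OF insert.hyps(1,2)]
      using insert by (rule_tac Padd) auto
  qed
  then show ?thesis using 1 by simp
qed

lemma gd_induct':
  assumes "P 0" "\<And>\<gamma> h. h \<in> dual_deg s G \<gamma> \<Longrightarrow> P h"
    "\<And>f g. f \<in> graded_dual s G \<Longrightarrow> g \<in> graded_dual s G \<Longrightarrow> P f \<Longrightarrow> P g \<Longrightarrow> P (f + g)"
  shows "\<forall>f\<in>graded_dual s G. P f"
  using gd_induct[of _ s G P] assms by blast

lemma dd_comp:
  assumes "lin_on s s UNIV \<beta>" "\<forall>\<gamma>. \<forall>v\<in>G \<gamma>. \<beta> v \<in> G \<gamma>" "f \<in> dual_deg s G \<gamma>"
  shows "f \<circ> \<beta> \<in> dual_deg s G \<gamma>"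
  using assms unfolding dual_deg_def lin_on_def by auto

lemma gd_comp:
  assumes "lin_on s s UNIV \<beta>" "\<forall>\<gamma>. \<forall>v\<in>G \<gamma>. \<beta> v \<in> G \<gamma>" "f \<in> graded_dual s G"
  shows "f \<circ> \<beta> \<in> graded_dual s G"
proof -
  have "\<forall>f\<in>graded_dual s G. f \<circ> \<beta> \<in> graded_dual s G"
  proof (rule gd_induct')
    show "0 \<circ> \<beta> \<in> graded_dual s G" using gd_zero by (simp add: comp_def zero_fun_def)
  next
    fix \<gamma> h assume "h \<in> dual_deg s G \<gamma>"
    then show "h \<circ> \<beta> \<in> graded_dual s G" using dd_comp[OF assms(1,2)] dd_gd by blast
  next
    fix f g assume "f \<circ> \<beta> \<in> graded_dual s G" "g \<circ> \<beta> \<in> graded_dual s G"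
    moreover have "(f + g) \<circ> \<beta> = (f \<circ> \<beta>) + (g \<circ> \<beta>)" by (simp add: fun_eq_iff)
    ultimately show "(f + g) \<circ> \<beta> \<in> graded_dual s G" using gd_add by metis
  qed
  then show ?thesis using assms(3) by blast
qed
theorem mainTheorem7:
  fixes sg :: "'k::field_char_0 \<Rightarrow> 'g::ab_group_add \<Rightarrow> 'g"
    and Gg :: "'G::ab_group_add \<Rightarrow> 'g set"
    and br :: "'g \<Rightarrow> 'g \<Rightarrow> 'g" and \<alpha> :: "'g \<Rightarrow> 'g"
    and \<epsilon> :: "'G \<Rightarrow> 'G \<Rightarrow> 'k"
    and sM :: "'k \<Rightarrow> 'm::ab_group_add \<Rightarrow> 'm" and GM :: "'G \<Rightarrow> 'm set"
    and \<rho> :: "'g \<Rightarrow> 'm \<Rightarrow> 'm" and \<beta> :: "'m \<Rightarrow> 'm"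
    and \<rho>t :: "'g \<Rightarrow> ('m \<Rightarrow> 'k) \<Rightarrow> ('m \<Rightarrow> 'k)"
  assumes g: "color_hom_lie sg Gg br \<alpha> \<epsilon>"
    and M: "graded_space sM GM"
    and \<beta>_lin: "lin_on sM sM UNIV \<beta>"
    and \<beta>_even: "\<forall>\<gamma>. \<forall>v\<in>GM \<gamma>. \<beta> v \<in> GM \<gamma>"
    and rep: "is_rep sg Gg br \<alpha> \<epsilon> sM UNIV GM \<rho> \<beta>"
    and \<rho>t_hom: "\<forall>a \<gamma> x f. x \<in> Gg a \<longrightarrow> f \<in> dual_deg sM GM \<gamma> \<longrightarrow>
                    \<rho>t x f = (\<lambda>m. - (\<epsilon> a \<gamma> * f (\<rho> x m)))"
    and \<rho>t_lin: "\<forall>x. lin_on dual_scale dual_scale (graded_dual sM GM) (\<rho>t x)"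
    and \<rho>t_lin2: "\<forall>x y. \<forall>f\<in>graded_dual sM GM. \<rho>t (x + y) f = \<rho>t x f + \<rho>t y f"
    and \<rho>t_lin3: "\<forall>c x. \<forall>f\<in>graded_dual sM GM. \<rho>t (sg c x) f = dual_scale c (\<rho>t x f)"
  shows "is_rep sg Gg br \<alpha> \<epsilon> dual_scale (graded_dual sM GM) (dual_deg sM GM) \<rho>t (\<lambda>f. f \<circ> \<beta>)
     \<longleftrightarrow> (\<forall>a b x y. x \<in> Gg a \<longrightarrow> y \<in> Gg b \<longrightarrow>
            (\<lambda>v. \<rho> x (\<rho> (\<alpha> y) v) - sM (\<epsilon> a b) (\<rho> y (\<rho> (\<alpha> x) v))) = \<beta> \<circ> \<rho> (br x y))"
proof -
  let ?GD = "graded_dual sM GM" and ?DD = "dual_deg sM GM"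
  have bich: "bicharacter \<epsilon>" using g unfolding color_hom_lie_def by blast
  have eR: "\<epsilon> a (b + c) = \<epsilon> a b * \<epsilon> a c" for a b c using bich unfolding bicharacter_def by blast
  have eL: "\<epsilon> (a + b) c = \<epsilon> a c * \<epsilon> b c" for a b c using bich unfolding bicharacter_def by blast
  have eI: "\<epsilon> a b * \<epsilon> b a = 1" for a b using bich unfolding bicharacter_def by blast
  have eNZ: "\<epsilon> a b \<noteq> 0" for a b using bich unfolding bicharacter_def by blast
  have Ggs: "graded_space sg Gg" using g unfolding color_hom_lie_def by blast
  have \<alpha>G: "x \<in> Gg a \<Longrightarrow> \<alpha> x \<in> Gg a" for x a using g unfolding color_hom_lie_def by blast
  have rho_lin: "lin_on sM sM UNIV (\<rho> x)" for x using rep unfolding is_rep_def by blast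
  have rho_deg: "x \<in> Gg a \<Longrightarrow> v \<in> GM b \<Longrightarrow> \<rho> x v \<in> GM (a + b)" for x a v b
    using rep unfolding is_rep_def by blast
  have rt_add: "f \<in> ?GD \<Longrightarrow> h \<in> ?GD \<Longrightarrow> \<rho>t x (f + h) = \<rho>t x f + \<rho>t x h" for x f h
    using \<rho>t_lin unfolding lin_on_def by blast
  have rt0: "\<rho>t x 0 = 0" for x using lin_zero[OF spec[OF \<rho>t_lin, of x] gd_zero] .
  have rtx0: "f \<in> ?GD \<Longrightarrow> \<rho>t 0 f = 0" for f
  proof -
    assume "f \<in> ?GD"
    then have "\<rho>t (0 + 0) f = \<rho>t 0 f + \<rho>t 0 f" using \<rho>t_lin2 by blast
    then show ?thesis by (metis add.right_neutral add_left_imp_eq)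
  qed
  have H: "x \<in> Gg a \<Longrightarrow> f \<in> ?DD \<gamma> \<Longrightarrow> \<rho>t x f \<in> ?DD (a + \<gamma>)" for x a f \<gamma>
  proof -
    assume x: "x \<in> Gg a" and f: "f \<in> ?DD \<gamma>"
    have eq: "\<rho>t x f = (\<lambda>m. - (\<epsilon> a \<gamma> * f (\<rho> x m)))" using \<rho>t_hom[rule_format, OF x f] .
    have fl: "lin_on sM (*) UNIV f" using f unfolding dual_deg_def by blast
    have fz: "\<gamma> + \<delta> \<noteq> 0 \<Longrightarrow> m \<in> GM \<delta> \<Longrightarrow> f m = 0" for \<delta> m using f unfolding dual_deg_def by blast
    show ?thesis unfolding eq dual_deg_def
    proof (intro CollectI conjI allI impI ballI)
      show "lin_on sM (*) UNIV (\<lambda>m. - (\<epsilon> a \<gamma> * f (\<rho> x m)))"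
        using fl rho_lin[of x] unfolding lin_on_def by (simp add: algebra_simps)
    next
      fix \<delta> m assume ne: "a + \<gamma> + \<delta> \<noteq> 0" and m: "m \<in> GM \<delta>"
      have "\<gamma> + (a + \<delta>) \<noteq> 0" using ne by (simp add: algebra_simps)
      then have "f (\<rho> x m) = 0" using fz rho_deg[OF x m] by blast
      then show "- (\<epsilon> a \<gamma> * f (\<rho> x m)) = 0" by simp
    qed
  qed
  have C1hom: "x \<in> Gg a \<Longrightarrow> \<forall>f\<in>?GD. \<rho>t x f \<in> ?GD" for x a
  proof -
    assume x: "x \<in> Gg a"
    show ?thesis
    proof (rule gd_induct')
      show "\<rho>t x 0 \<in> ?GD" using rt0 gd_zero by simp
    next
      fix \<gamma> h assume "h \<in> ?DD \<gamma>" then show "\<rho>t x h \<in> ?GD" using H[OF x] dd_gd by blast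
    next
      fix f h assume "f \<in> ?GD" "h \<in> ?GD" "\<rho>t x f \<in> ?GD" "\<rho>t x h \<in> ?GD"
      then show "\<rho>t x (f + h) \<in> ?GD" using rt_add gd_add by simp
    qed
  qed
  have C1: "\<forall>f\<in>?GD. \<rho>t x f \<in> ?GD" for x
  proof -
    obtain c where c: "finite {\<gamma>. c \<gamma> \<noteq> 0}" "\<forall>\<gamma>. c \<gamma> \<in> Gg \<gamma>" "x = (\<Sum>\<gamma>\<in>{\<gamma>. c \<gamma> \<noteq> 0}. c \<gamma>)"
      using Ggs unfolding graded_space_def by blast
    have "finite T \<Longrightarrow> \<forall>f\<in>?GD. \<rho>t (\<Sum>\<gamma>\<in>T. c \<gamma>) f \<in> ?GD" for T
    proof (induction T rule: finite_induct)
      case empty show ?case unfolding sum.empty using rtx0 gd_zero by metis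
    next
      case (insert d F)
      show ?case
      proof
        fix f assume f: "f \<in> ?GD"
        have "\<rho>t (\<Sum>\<gamma>\<in>insert d F. c \<gamma>) f = \<rho>t (c d) f + \<rho>t (\<Sum>\<gamma>\<in>F. c \<gamma>) f"
          using insert.hyps f \<rho>t_lin2 by simp
        then show "\<rho>t (\<Sum>\<gamma>\<in>insert d F. c \<gamma>) f \<in> ?GD"
          using insert.IH f C1hom[OF c(2)[rule_format, of d]] gd_add by metis
      qed
    qed
    then show ?thesis using c by simp
  qed
  have brG: "x \<in> Gg a \<Longrightarrow> y \<in> Gg b \<Longrightarrow> br x y \<in> Gg (a + b)" for x y a b
  proof -
    have "\<forall>a b x y. x \<in> Gg a \<longrightarrow> y \<in> Gg b \<longrightarrow> br x y \<in> Gg (a + b)"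
      using g unfolding color_hom_lie_def by (elim conjE)
    then show "x \<in> Gg a \<Longrightarrow> y \<in> Gg b \<Longrightarrow> br x y \<in> Gg (a + b)" by blast
  qed
  have flin: "f \<in> ?DD \<gamma> \<Longrightarrow> lin_on sM (*) UNIV f" for f \<gamma> unfolding dual_deg_def by blast
  have K1: "\<rho>t (br x y) (f \<circ> \<beta>) = (\<lambda>m. - (\<epsilon> a \<gamma> * \<epsilon> b \<gamma>) * f (\<beta> (\<rho> (br x y) m)))"
    if x: "x \<in> Gg a" and y: "y \<in> Gg b" and f: "f \<in> ?DD \<gamma>" for x y a b f \<gamma>
  proof -
    have "f \<circ> \<beta> \<in> ?DD \<gamma>" using dd_comp[OF \<beta>_lin \<beta>_even f] .
    then have "\<rho>t (br x y) (f \<circ> \<beta>) = (\<lambda>m. - (\<epsilon> (a + b) \<gamma> * (f \<circ> \<beta>) (\<rho> (br x y) m)))"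
      using \<rho>t_hom[rule_format, OF brG[OF x y] \<open>f \<circ> \<beta> \<in> ?DD \<gamma>\<close>] by simp
    then show ?thesis by (simp add: eL)
  qed
  have alg: "-(e1*e3 * -(e4*P)) - e1 * -(e2*e4 * -(e3*Q)) = -(e3*e4)*(Q - e1*P)"
    if "e1 * e2 = 1" for e1 e2 e3 e4 P Q :: 'k
  proof -
    have "-(e1*e3 * -(e4*P)) - e1 * -(e2*e4 * -(e3*Q)) = e1*e3*e4*P - (e1*e2)*(e3*e4*Q)"
      by (simp add: algebra_simps)
    then show ?thesis using that by (simp add: algebra_simps)
  qed
  have K2: "\<rho>t (\<alpha> x) (\<rho>t y f) - dual_scale (\<epsilon> a b) (\<rho>t (\<alpha> y) (\<rho>t x f))
      = (\<lambda>m. - (\<epsilon> a \<gamma> * \<epsilon> b \<gamma>) * f (\<rho> x (\<rho> (\<alpha> y) m) - sM (\<epsilon> a b) (\<rho> y (\<rho> (\<alpha> x) m))))"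
    if x: "x \<in> Gg a" and y: "y \<in> Gg b" and f: "f \<in> ?DD \<gamma>" for x y a b f \<gamma>
  proof -
    have f1: "\<rho>t y f = (\<lambda>m. - (\<epsilon> b \<gamma> * f (\<rho> y m)))" using \<rho>t_hom[rule_format, OF y f] .
    have f2: "\<rho>t x f = (\<lambda>m. - (\<epsilon> a \<gamma> * f (\<rho> x m)))" using \<rho>t_hom[rule_format, OF x f] .
    have g1: "\<rho>t (\<alpha> x) (\<rho>t y f) = (\<lambda>m. - (\<epsilon> a (b + \<gamma>) * \<rho>t y f (\<rho> (\<alpha> x) m)))"
      using \<rho>t_hom[rule_format, OF \<alpha>G[OF x] H[OF y f]] .
    have g2: "\<rho>t (\<alpha> y) (\<rho>t x f) = (\<lambda>m. - (\<epsilon> b (a + \<gamma>) * \<rho>t x f (\<rho> (\<alpha> y) m)))"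
      using \<rho>t_hom[rule_format, OF \<alpha>G[OF y] H[OF x f]] .
    have fl: "f (u - sM c w) = f u - c * f w" for u w c
      using lin_diff[OF flin[OF f]] flin[OF f] unfolding lin_on_def by simp
    show ?thesis
    proof (rule ext)
      fix m
      show "(\<rho>t (\<alpha> x) (\<rho>t y f) - dual_scale (\<epsilon> a b) (\<rho>t (\<alpha> y) (\<rho>t x f))) m =
         - (\<epsilon> a \<gamma> * \<epsilon> b \<gamma>) * f (\<rho> x (\<rho> (\<alpha> y) m) - sM (\<epsilon> a b) (\<rho> y (\<rho> (\<alpha> x) m)))"
        unfolding g1 g2 unfolding f1 f2 fl minus_apply dual_scale_def eR
        by (rule alg[OF eI[of a b]])
    qed
  qed
  have rep_id: "\<forall>a b x y. x \<in> Gg a \<longrightarrow> y \<in> Gg b \<longrightarrow>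
        (\<forall>v\<in>V. \<rho> (br x y) (\<beta> v) = \<rho> (\<alpha> x) (\<rho> y v) - sV (\<epsilon> a b) (\<rho> (\<alpha> y) (\<rho> x v)))"
    if "is_rep sg Gg br \<alpha> \<epsilon> sV V GV \<rho> \<beta>" for sV V GV \<rho> \<beta>
    using that unfolding is_rep_def by (elim conjE)
  show ?thesis
  proof
    assume R: "is_rep sg Gg br \<alpha> \<epsilon> dual_scale ?GD ?DD \<rho>t (\<lambda>f. f \<circ> \<beta>)"
    show "\<forall>a b x y. x \<in> Gg a \<longrightarrow> y \<in> Gg b \<longrightarrow>
            (\<lambda>v. \<rho> x (\<rho> (\<alpha> y) v) - sM (\<epsilon> a b) (\<rho> y (\<rho> (\<alpha> x) v))) = \<beta> \<circ> \<rho> (br x y)"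
    proof (intro allI impI ext)
      fix a b x y m assume x: "x \<in> Gg a" and y: "y \<in> Gg b"
      let ?D = "\<rho> x (\<rho> (\<alpha> y) m) - sM (\<epsilon> a b) (\<rho> y (\<rho> (\<alpha> x) m))"
      let ?B = "\<beta> (\<rho> (br x y) m)"
      show "?D = (\<beta> \<circ> \<rho> (br x y)) m"
      proof (rule ccontr)
        assume "?D \<noteq> (\<beta> \<circ> \<rho> (br x y)) m"
        then have "?D - ?B \<noteq> 0" by simp
        then obtain \<gamma> f where f: "f \<in> ?DD \<gamma>" and fne: "f (?D - ?B) \<noteq> 0"
          using separate[OF M] by blast
        have "\<rho>t (br x y) (f \<circ> \<beta>) = \<rho>t (\<alpha> x) (\<rho>t y f) - dual_scale (\<epsilon> a b) (\<rho>t (\<alpha> y) (\<rho>t x f))"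
          using rep_id[OF R] x y dd_gd[OF f] by simp
        then have "(\<lambda>m. - (\<epsilon> a \<gamma> * \<epsilon> b \<gamma>) * f (\<beta> (\<rho> (br x y) m))) =
          (\<lambda>m. - (\<epsilon> a \<gamma> * \<epsilon> b \<gamma>) * f (\<rho> x (\<rho> (\<alpha> y) m) - sM (\<epsilon> a b) (\<rho> y (\<rho> (\<alpha> x) m))))"
          unfolding K1[OF x y f] K2[OF x y f] .
        then have "- (\<epsilon> a \<gamma> * \<epsilon> b \<gamma>) * f ?B = - (\<epsilon> a \<gamma> * \<epsilon> b \<gamma>) * f ?D"
          by (rule fun_cong)
        then have "f ?B = f ?D" using eNZ by simp
        then show False using fne lin_diff[OF flin[OF f]] by simp
      qed
    qed
  next
    assume C: "\<forall>a b x y. x \<in> Gg a \<longrightarrow> y \<in> Gg b \<longrightarrow>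
            (\<lambda>v. \<rho> x (\<rho> (\<alpha> y) v) - sM (\<epsilon> a b) (\<rho> y (\<rho> (\<alpha> x) v))) = \<beta> \<circ> \<rho> (br x y)"
    have ID: "\<forall>f\<in>?GD. \<rho>t (br x y) (f \<circ> \<beta>) = \<rho>t (\<alpha> x) (\<rho>t y f) - dual_scale (\<epsilon> a b) (\<rho>t (\<alpha> y) (\<rho>t x f))"
      if x: "x \<in> Gg a" and y: "y \<in> Gg b" for a b x y
    proof (rule gd_induct')
      have "0 \<circ> \<beta> = (0 :: 'm \<Rightarrow> 'k)" by (simp add: fun_eq_iff)
      moreover have "dual_scale c (0 :: 'm \<Rightarrow> 'k) = 0" for c by (simp add: dual_scale_def fun_eq_iff)
      ultimately show "\<rho>t (br x y) (0 \<circ> \<beta>) = \<rho>t (\<alpha> x) (\<rho>t y 0) - dual_scale (\<epsilon> a b) (\<rho>t (\<alpha> y) (\<rho>t x 0))"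
        by (simp add: rt0)
    next
      fix \<gamma> h assume h: "h \<in> ?DD \<gamma>"
      have "\<beta> (\<rho> (br x y) m) = \<rho> x (\<rho> (\<alpha> y) m) - sM (\<epsilon> a b) (\<rho> y (\<rho> (\<alpha> x) m))" for m
        using fun_cong[OF C[rule_format, OF x y], of m] by simp
      then show "\<rho>t (br x y) (h \<circ> \<beta>) = \<rho>t (\<alpha> x) (\<rho>t y h) - dual_scale (\<epsilon> a b) (\<rho>t (\<alpha> y) (\<rho>t x h))"
        unfolding K1[OF x y h] K2[OF x y h] by simp
    next
      fix f h assume f: "f \<in> ?GD" and h: "h \<in> ?GD"
        and IH1: "\<rho>t (br x y) (f \<circ> \<beta>) = \<rho>t (\<alpha> x) (\<rho>t y f) - dual_scale (\<epsilon> a b) (\<rho>t (\<alpha> y) (\<rho>t x f))"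
        and IH2: "\<rho>t (br x y) (h \<circ> \<beta>) = \<rho>t (\<alpha> x) (\<rho>t y h) - dual_scale (\<epsilon> a b) (\<rho>t (\<alpha> y) (\<rho>t x h))"
      have c1: "(f + h) \<circ> \<beta> = (f \<circ> \<beta>) + (h \<circ> \<beta>)" by (simp add: fun_eq_iff)
      have ds: "dual_scale c (u + w) = dual_scale c u + dual_scale c w" for c and u w :: "'m \<Rightarrow> 'k"
        by (simp add: dual_scale_def fun_eq_iff algebra_simps)
      have "\<rho>t (br x y) ((f + h) \<circ> \<beta>) = \<rho>t (br x y) (f \<circ> \<beta>) + \<rho>t (br x y) (h \<circ> \<beta>)"
        unfolding c1 using rt_add gd_comp[OF \<beta>_lin \<beta>_even] f h by blast
      moreover have "\<rho>t (\<alpha> x) (\<rho>t y (f + h)) = \<rho>t (\<alpha> x) (\<rho>t y f) + \<rho>t (\<alpha> x) (\<rho>t y h)"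
        using rt_add C1 f h by simp
      moreover have "\<rho>t (\<alpha> y) (\<rho>t x (f + h)) = \<rho>t (\<alpha> y) (\<rho>t x f) + \<rho>t (\<alpha> y) (\<rho>t x h)"
        using rt_add C1 f h by simp
      ultimately show "\<rho>t (br x y) ((f + h) \<circ> \<beta>) = \<rho>t (\<alpha> x) (\<rho>t y (f + h)) - dual_scale (\<epsilon> a b) (\<rho>t (\<alpha> y) (\<rho>t x (f + h)))"
        using IH1 IH2 by (simp add: ds algebra_simps)
    qed
    show "is_rep sg Gg br \<alpha> \<epsilon> dual_scale ?GD ?DD \<rho>t (\<lambda>f. f \<circ> \<beta>)"
      unfolding is_rep_def
      using C1 \<rho>t_lin \<rho>t_lin2 \<rho>t_lin3 H ID by simp
  qed
qed
end
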